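(* Let $\mathcal{G}=(\mathcal{V},\mathcal{E},\mathcal{W})$ be an undirected weighted graph with negative-weight edge set $\mathcal{E}_-$ and positive-weight edge set $\mathcal{E}_+$, and assume $\mathcal{G}_+=(\mathcal{V},\mathcal{E}_+)$ (with its weights) is connected. If $L(\mathcal{G})$ is positive semi-definite, then $$\sum_{k\in\mathcal{E}_-}|\mathcal{W}(k)|^{-1}\ \ge\ \mathbf{R}_{tot}:=\operatorname{trace}\big(E_-^TL^{\dagger}(\mathcal{G}_+)E_-\big)=\sum_{k=(u_k,v_k)\in\mathcal{E}_-}\mathcal{R}_{u_kv_k}(\mathcal{G}_+),$$ where $E_-$ is the incidence matrix of the graph $(\mathcal{V},\mathcal{E}_-)$.
   Context: Weights $\mathcal{W}:\mathcal{E}\to\mathbb{R}\setminus\{0\}$; with an arbitrary edge orientation the incidence matrix has in the column of edge $(i,j)$ entry $+1$ in row $i$, $-1$ in row $j$, $0$ elsewhere; $L(\mathcal{G})=EWE^T$ with $W$ the diagonal weight matrix. $L^{\dagger}$ denotes the Moore–Penrose pseudo-inverse, and the effective resistance is $\mathcal{R}_{uv}(\mathcal{H})=(\mathbf{e}_u-\mathbf{e}_v)^TL^{\dagger}(\mathcal{H})(\mathbf{e}_u-\mathbf{e}_v)$ with $\mathbf{e}_u$ the standard basis vector of node $u$. *)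

theory Defs
  imports "HOL-Analysis.Analysis"
begin

text \<open>Vertices form a finite type 'n. Edges are given with an arbitrary orientation as
  ordered pairs (i,j); an edge set is a simple undirected graph with one chosen orientation.\<close>

definition oriented_simple_graph :: "('n \<times> 'n) set \<Rightarrow> bool" where
  "oriented_simple_graph E \<longleftrightarrow> (\<forall>(i,j)\<in>E. i \<noteq> j \<and> (j,i) \<notin> E)"

definition inc :: "'n \<times> 'n \<Rightarrow> 'n \<Rightarrow> real" where
  "inc e k = (if k = fst e then 1 else if k = snd e then -1 else 0)"

text \<open>Laplacian L = E W E^T, written out entrywise.\<close>
definition laplacian :: "('n::finite \<times> 'n) set \<Rightarrow> ('n \<times> 'n \<Rightarrow> real) \<Rightarrow> real^'n^'n" where
  "laplacian E W = (\<chi> i j. \<Sum>e\<in>E. inc e i * W e * inc e j)"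

definition psd :: "real^'n^'n \<Rightarrow> bool" where
  "psd A \<longleftrightarrow> (\<forall>x. 0 \<le> x \<bullet> (A *v x))"

definition pinv :: "real^'n^'n \<Rightarrow> real^'n^'n" where
  "pinv A = (THE X. A ** X ** A = A \<and> X ** A ** X = X \<and>
                    transpose (A ** X) = A ** X \<and> transpose (X ** A) = X ** A)"

definition eff_res :: "real^'n^'n \<Rightarrow> 'n \<Rightarrow> 'n \<Rightarrow> real" where
  "eff_res L u v = (axis u 1 - axis v 1) \<bullet> (pinv L *v (axis u 1 - axis v 1))"

definition graph_connected :: "('n \<times> 'n) set \<Rightarrow> bool" where
  "graph_connected E \<longleftrightarrow> (\<forall>u v. (u, v) \<in> (E \<union> E\<inverse>)\<^sup>*)"

end

theory Submission
  imports Defs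
begin

definition penrose :: "real^'n^'n \<Rightarrow> real^'n^'n \<Rightarrow> bool" where
  "penrose A X \<longleftrightarrow> A ** X ** A = A \<and> X ** A ** X = X \<and>
                    transpose (A ** X) = A ** X \<and> transpose (X ** A) = X ** A"

lemma penrose_unique:
  fixes A X Y :: "real^'n^'n"
  assumes "penrose A X" "penrose A Y" shows "X = Y"
proof -
  have X1: "A ** X ** A = A" and X2: "X ** A ** X = X" and X3: "transpose (A ** X) = A ** X"
    and X4: "transpose (X ** A) = X ** A" using assms(1) unfolding penrose_def by auto
  have Y1: "A ** Y ** A = A" and Y2: "Y ** A ** Y = Y" and Y3: "transpose (A ** Y) = A ** Y"
    and Y4: "transpose (Y ** A) = Y ** A" using assms(2) unfolding penrose_def by auto
  have "X = X ** (A ** X)" using X2 by (simp add: matrix_mul_assoc)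
  also have "\<dots> = X ** transpose (A ** X)" using X3 by simp
  also have "\<dots> = X ** transpose X ** transpose A" by (simp add: matrix_transpose_mul matrix_mul_assoc)
  also have "\<dots> = X ** transpose X ** transpose (A ** Y ** A)" using Y1 by simp
  also have "\<dots> = X ** (transpose (A ** X)) ** transpose (A ** Y)"
    by (simp add: matrix_transpose_mul matrix_mul_assoc)
  also have "\<dots> = X ** A ** Y" using X3 Y3 X2 by (metis matrix_mul_assoc)
  finally have XX: "X = X ** A ** Y" .
  have "Y = (Y ** A) ** Y" using Y2 by (simp add: matrix_mul_assoc)
  also have "\<dots> = transpose (Y ** A) ** Y" using Y4 by simp
  also have "\<dots> = transpose A ** transpose Y ** Y" by (simp add: matrix_transpose_mul matrix_mul_assoc)
  also have "\<dots> = transpose (A ** X ** A) ** transpose Y ** Y" using X1 by simp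
  also have "\<dots> = transpose (X ** A) ** transpose (Y ** A) ** Y"
    by (simp add: matrix_transpose_mul matrix_mul_assoc)
  also have "\<dots> = X ** A ** Y" using X4 Y4 Y2 by (metis matrix_mul_assoc)
  finally show ?thesis using XX by simp
qed


lemma mdiff_l: "(A::real^'n^'n) ** (B - C) = A ** B - A ** C"
  by (simp add: matrix_matrix_mult_def vec_eq_iff right_diff_distrib sum_subtractf)
lemma mdiff_r: "((A::real^'n^'n) - B) ** C = A ** C - B ** C"
  by (simp add: matrix_matrix_mult_def vec_eq_iff left_diff_distrib sum_subtractf)
lemma madd_r: "((A::real^'n^'n) + B) ** C = A ** C + B ** C"
  by (simp add: matrix_matrix_mult_def vec_eq_iff distrib_right sum.distrib)
lemma transpose_zero: "transpose (0::real^'n^'n) = 0"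
  by (simp add: transpose_def vec_eq_iff)
lemma transpose_diff: "transpose ((A::real^'n^'n) - B) = transpose A - transpose B"
  by (simp add: transpose_def vec_eq_iff)

lemma penrose_exists:
  fixes A :: "real^'n^'n"
  assumes sym: "transpose A = A"
  shows "\<exists>X. penrose A X"
proof -
  let ?K = "{x::real^'n. A *v x = 0}"
  have subK: "subspace ?K"
    unfolding subspace_def by (auto simp: matrix_vector_right_distrib matrix_vector_mult_scaleR)
  obtain T where T0: "0 \<notin> T" and TK: "T \<subseteq> ?K" and Torth: "pairwise orthogonal T"
     and Tind: "independent T" and Tspan: "span T = ?K"
    by (rule orthogonal_basis_subspace[OF subK])
  have finT: "finite T" by (rule pairwise_orthogonal_imp_finite[OF Torth])
  define P :: "real^'n^'n" where "P = (\<chi> i j. \<Sum>b\<in>T. b$i * b$j / (b \<bullet> b))"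
  have Pv: "P *v x = (\<Sum>b\<in>T. (b \<bullet> x / (b \<bullet> b)) *\<^sub>R b)" for x
  proof -
    have "(P *v x) $ i = (\<Sum>b\<in>T. (b \<bullet> x / (b \<bullet> b)) * b $ i)" for i
    proof -
      have "(P *v x) $ i = (\<Sum>j\<in>UNIV. (\<Sum>b\<in>T. b$i * b$j / (b \<bullet> b)) * x$j)"
        unfolding P_def matrix_vector_mult_def by simp
      also have "\<dots> = (\<Sum>j\<in>UNIV. \<Sum>b\<in>T. b$i * b$j / (b \<bullet> b) * x$j)"
        by (simp add: sum_distrib_right)
      also have "\<dots> = (\<Sum>b\<in>T. \<Sum>j\<in>UNIV. b$i * b$j / (b \<bullet> b) * x$j)"
        by (rule sum.swap)
      also have "\<dots> = (\<Sum>b\<in>T. (b \<bullet> x / (b \<bullet> b)) * b $ i)"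
      proof (rule sum.cong[OF refl])
        fix b :: "real^'n"
        have "(b \<bullet> x / (b \<bullet> b)) * b $ i = (\<Sum>j\<in>UNIV. b$j * x$j) / (b \<bullet> b) * b $ i"
          by (simp add: inner_vec_def)
        also have "\<dots> = (\<Sum>j\<in>UNIV. b$j * x$j / (b \<bullet> b) * b $ i)"
          by (simp add: sum_divide_distrib sum_distrib_right)
        finally show "(\<Sum>j\<in>UNIV. b$i * b$j / (b \<bullet> b) * x$j) = (b \<bullet> x / (b \<bullet> b)) * b $ i"
          by (simp add: mult.commute mult.left_commute)
      qed
      finally show ?thesis .
    qed
    then show ?thesis by (simp add: vec_eq_iff sum_component)
  qed

  have PK: "P *v x \<in> ?K" for x
    unfolding Pv using Tspan by (metis (no_types, lifting) span_base span_mul span_sum)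
  have AP: "A ** P = 0"
    using PK by (intro matrix_eq[THEN iffD2]) (simp add: matrix_vector_mul_assoc[symmetric])
  have Pid: "P *v x = x" if "x \<in> ?K" for x
  proof -
    have xs: "x \<in> span T" using that Tspan by simp
    have "orthogonal y (x - P *v x)" if "y \<in> span T" for y
      unfolding Pv using Gram_Schmidt_step[OF Torth that] .
    moreover have "x - P *v x \<in> span T" using xs PK Tspan by (metis span_diff)
    ultimately have "orthogonal (x - P *v x) (x - P *v x)" by blast
    then show ?thesis by (simp add: orthogonal_def)
  qed
  have Psym: "transpose P = P" unfolding P_def by (simp add: transpose_def vec_eq_iff mult.commute)
  have PA: "P ** A = 0"
    using arg_cong[OF AP, of transpose] by (simp add: matrix_transpose_mul Psym sym transpose_zero)
  have PP: "P ** P = P"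
    by (rule matrix_eq[THEN iffD2]) (simp add: matrix_vector_mul_assoc[symmetric], metis Pid PK)
  define B where "B = A + P"
  have injB: "inj ((*v) B)"
  proof (rule injI)
    fix x y assume "B *v x = B *v y"
    then have z: "B *v (x - y) = 0" by (simp add: matrix_vector_mult_diff_distrib)
    let ?z = "x - y"
    have "P *v (B *v ?z) = 0" using z by simp
    then have "P *v ?z = 0" unfolding B_def
      by (simp add: matrix_vector_mul_assoc matrix_add_ldistrib PA PP)
    moreover have "A *v ?z = 0" using z calculation unfolding B_def
      by (simp add: matrix_vector_mult_add_rdistrib)
    ultimately have "?z = 0" using Pid[of ?z] by simp
    then show "x = y" by simp
  qed
  obtain C where CB: "C ** B = mat 1"
    using injB matrix_left_invertible_injective by blast
  have BC: "B ** C = mat 1" using CB matrix_left_right_inverse by blast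
  have BP: "B ** P = P" unfolding B_def by (simp add: madd_r AP PP)
  have PB: "P ** B = P" unfolding B_def by (simp add: matrix_add_ldistrib PA PP)
  have CP: "C ** P = P" by (metis BP CB matrix_mul_assoc matrix_mul_lid)
  have PC: "P ** C = P" by (metis PB BC matrix_mul_assoc matrix_mul_rid)
  have AB: "A = B - P" unfolding B_def by simp
  define X where "X = C - P"
  have AX: "A ** X = mat 1 - P"
    unfolding X_def mdiff_l AP by (simp add: AB mdiff_r BC PC)
  have XA: "X ** A = mat 1 - P"
    unfolding X_def mdiff_r PA by (simp add: AB mdiff_l CB CP)
  have "penrose A X"
    unfolding penrose_def
  proof (intro conjI)
    show "A ** X ** A = A" using AX by (simp add: mdiff_r PA)
    show "X ** A ** X = X" using XA by (simp add: mdiff_r X_def mdiff_l PC PP)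
    show "transpose (A ** X) = A ** X" using AX by (simp add: transpose_diff Psym)
    show "transpose (X ** A) = X ** A" using XA by (simp add: transpose_diff Psym)
  qed
  then show ?thesis by blast
qed



lemma pinv_penrose:
  fixes A :: "real^'n^'n"
  assumes "transpose A = A"
  shows "penrose A (pinv A)"
proof -
  have "\<exists>!X. penrose A X" using penrose_exists[OF assms] penrose_unique by blast
  then show ?thesis unfolding pinv_def penrose_def[symmetric] by (rule theI')
qed

lemma pinv_sym:
  fixes A :: "real^'n^'n"
  assumes sA: "transpose A = A"
  shows "transpose (pinv A) = pinv A"
proof -
  let ?X = "pinv A"
  have P: "penrose A ?X" by (rule pinv_penrose[OF sA])
  have "penrose A (transpose ?X)"
    unfolding penrose_def
  proof (intro conjI)
    show "A ** transpose ?X ** A = A"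
      using P unfolding penrose_def
      by (metis sA matrix_transpose_mul matrix_mul_assoc)
    show "transpose ?X ** A ** transpose ?X = transpose ?X"
      using P unfolding penrose_def
      by (metis sA matrix_transpose_mul matrix_mul_assoc)
    show "transpose (A ** transpose ?X) = A ** transpose ?X"
      using P unfolding penrose_def
      by (metis sA matrix_transpose_mul transpose_transpose)
    show "transpose (transpose ?X ** A) = transpose ?X ** A"
      using P unfolding penrose_def
      by (metis sA matrix_transpose_mul transpose_transpose)
  qed
  then show ?thesis using P penrose_unique by blast
qed

definition bv :: "'n \<times> 'n \<Rightarrow> real^'n" where
  "bv e = (\<chi> i. inc e i)"

lemma laplacian_sym: "transpose (laplacian F W) = laplacian F W"
  unfolding laplacian_def transpose_def by (simp add: vec_eq_iff mult.commute mult.left_commute)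

lemma quad:
  fixes x :: "real^'n::finite"
  shows "x \<bullet> (laplacian F W *v x) = (\<Sum>e\<in>F. W e * (bv e \<bullet> x)^2)"
proof -
  have "x \<bullet> (laplacian F W *v x) = (\<Sum>i\<in>UNIV. \<Sum>j\<in>UNIV. \<Sum>e\<in>F. W e * (inc e i * x$i) * (inc e j * x$j))"
    unfolding inner_vec_def laplacian_def matrix_vector_mult_def
    by (simp add: sum_distrib_left sum_distrib_right mult_ac)
  also have "\<dots> = (\<Sum>i\<in>UNIV. \<Sum>e\<in>F. \<Sum>j\<in>UNIV. W e * (inc e i * x$i) * (inc e j * x$j))"
    by (rule sum.cong[OF refl], rule sum.swap)
  also have "\<dots> = (\<Sum>e\<in>F. \<Sum>i\<in>UNIV. \<Sum>j\<in>UNIV. W e * (inc e i * x$i) * (inc e j * x$j))"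
    by (rule sum.swap)
  also have "\<dots> = (\<Sum>e\<in>F. W e * (bv e \<bullet> x)^2)"
    unfolding bv_def inner_vec_def power2_eq_square
    by (simp add: sum_distrib_left sum_distrib_right mult_ac)
  finally show ?thesis .
qed

lemma bv_axis: "fst e \<noteq> snd e \<Longrightarrow> axis (fst e) 1 - axis (snd e) 1 = bv e"
  unfolding bv_def inc_def by (auto simp: vec_eq_iff axis_def)

lemma res_bound:
  fixes L X :: "real^'n^'n" and b :: "real^'n" and c :: real
  assumes cpos: "c > 0" and ineq: "\<And>x. c * (b \<bullet> x)^2 \<le> x \<bullet> (L *v x)"
    and P: "penrose L X" and sX: "transpose X = X"
  shows "b \<bullet> (X *v b) \<le> 1 / c"
proof -
  let ?r = "b \<bullet> (X *v b)"
  let ?y = "X *v b"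
  have XLX: "X ** L ** X = X" using P unfolding penrose_def by auto
  have yv: "?y = b v* X" by (metis sX vector_transpose_matrix)
  have "?y \<bullet> (L *v ?y) = b \<bullet> (X *v (L *v (X *v b)))"
    by (simp add: yv dot_lmul_matrix)
  also have "\<dots> = ?r" using XLX by (simp add: matrix_vector_mul_assoc matrix_mul_assoc)
  finally have q: "?y \<bullet> (L *v ?y) = ?r" .
  have "c * ?r^2 \<le> ?r" using ineq[of ?y] q by simp
  show ?thesis
  proof (cases "?r \<le> 0")
    case True
    have "0 < 1 / c" using cpos by simp
    then show ?thesis using True by linarith
  next
    case False
    then have rp: "0 < ?r" by simp
    have "(c * ?r) * ?r \<le> 1 * ?r" using \<open>c * ?r^2 \<le> ?r\<close>
      by (simp add: power2_eq_square mult.assoc)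
    then have "c * ?r \<le> 1" using mult_le_cancel_right_pos[OF rp] by blast
    then show ?thesis using cpos by (simp add: pos_le_divide_eq mult.commute)
  qed
qed

theorem corollary3:
  fixes E :: "('n::finite \<times> 'n) set" and W :: "'n \<times> 'n \<Rightarrow> real"
  assumes "oriented_simple_graph E"
    and "\<forall>e\<in>E. W e \<noteq> 0"
    and "graph_connected {e\<in>E. W e > 0}"
    and "psd (laplacian E W)"
  shows "(\<Sum>e\<in>{e\<in>E. W e < 0}. 1 / \<bar>W e\<bar>)
           \<ge> (\<Sum>e\<in>{e\<in>E. W e < 0}. eff_res (laplacian {e\<in>E. W e > 0} W) (fst e) (snd e))"
proof -
  let ?Ep = "{e\<in>E. W e > 0}"
  let ?En = "{e\<in>E. W e < 0}"
  let ?Lp = "laplacian ?Ep W"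
  let ?X = "pinv ?Lp"
  have PX: "penrose ?Lp ?X" by (rule pinv_penrose[OF laplacian_sym])
  have sX: "transpose ?X = ?X" by (rule pinv_sym[OF laplacian_sym])
  have finE: "finite E" by simp
  have key: "eff_res ?Lp (fst k) (snd k) \<le> 1 / \<bar>W k\<bar>" if kE: "k \<in> ?En" for k
  proof -
    have kin: "k \<in> E" and kneg: "W k < 0" using kE by auto
    have uv: "fst k \<noteq> snd k" using assms(1) kin unfolding oriented_simple_graph_def by auto
    let ?g = "\<lambda>x e. W e * (bv e \<bullet> x)^2"
    have ineq: "(- W k) * (bv k \<bullet> x)^2 \<le> x \<bullet> (?Lp *v x)" for x
    proof -
      have "0 \<le> x \<bullet> (laplacian E W *v x)" using assms(4) unfolding psd_def by blast
      also have "\<dots> = (\<Sum>e\<in>E. ?g x e)" by (rule quad)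
      also have "\<dots> = (\<Sum>e\<in>?Ep. ?g x e) + (\<Sum>e\<in>E - ?Ep. ?g x e)"
        by (subst sum.subset_diff[of ?Ep E]) (auto simp: add.commute)
      also have "(\<Sum>e\<in>E - ?Ep. ?g x e) = ?g x k + (\<Sum>e\<in>E - ?Ep - {k}. ?g x e)"
        using kin kneg by (intro sum.remove) auto
      also have "(\<Sum>e\<in>E - ?Ep - {k}. ?g x e) \<le> 0"
        by (rule sum_nonpos) (auto simp: mult_nonpos_nonneg)
      finally have "0 \<le> (\<Sum>e\<in>?Ep. ?g x e) + ?g x k" by simp
      then show ?thesis using quad[of x ?Ep W] by simp
    qed
    have "bv k \<bullet> (?X *v bv k) \<le> 1 / (- W k)"
      by (rule res_bound[OF _ ineq PX sX]) (use kneg in simp)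
    then show ?thesis unfolding eff_res_def bv_axis[OF uv] using kneg by simp
  qed
  show ?thesis by (rule sum_mono) (use key in blast)
qed

end
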